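(* Let $\mathrm{M}=\langle e_1+I,\ e_2+I,\ -I\rangle$, where $e_1,e_2$ are the standard basis vectors of $E^2$. The group $\mathrm{Aff}(\mathrm{M})$ has a normal dihedral subgroup $\mathrm{K}$ of order 4 generated by $(e_1/2+I)_\star$ and $(e_2/2+I)_\star$. The map $\eta:\mathrm{Aff}(\mathrm{M})\to\mathrm{PGL}(2,\mathbb Z)$ defined by $\eta((a+A)_\star)=\pm A$ for each $A\in\mathrm{GL}(2,\mathbb Z)$ is an epimorphism with kernel $\mathrm{K}$. The map $\sigma:\mathrm{PGL}(2,\mathbb Z)\to\mathrm{Aff}(\mathrm{M})$ defined by $\sigma(\pm A)=A_\star$ is a monomorphism, and $\sigma$ is a right inverse of $\eta$.
   Context: Affine maps of $E^2$ are written $a+A$ (meaning $x\mapsto a+Ax$); $a+I$ is translation by $a$. For a 2-space group $\mathrm{M}$, let $N_A(\mathrm{M})$ be its normalizer in the affine group of $E^2$. Each $a+A\in N_A(\mathrm{M})$ induces an affinity $(a+A)_\star:\mathrm{M}x\mapsto\mathrm{M}(a+Ax)$ of the flat orbifold $E^2/\mathrm{M}$; $\mathrm{Aff}(\mathrm{M})$ is the group of all such affinities (isomorphic to $N_A(\mathrm{M})/\mathrm{M}$). A dihedral group of order 4 means the Klein four-group. $\mathrm{PGL}(2,\mathbb Z)=\mathrm{GL}(2,\mathbb Z)/\{\pm I\}$, with the class of $A$ written $\pm A$. *)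

theory Defs
  imports "HOL-Analysis.Analysis" "HOL-Algebra.Algebra"
begin

text \<open>An affine map a+A of E^2 is represented by the pair (a, A); it acts by x \<mapsto> a + A x.\<close>
type_synonym aff = "(real^2) \<times> (real^2^2)"

definition aff_app :: "aff \<Rightarrow> real^2 \<Rightarrow> real^2" where
  "aff_app g x = fst g + snd g *v x"

definition AffE :: "aff monoid" where
  "AffE = \<lparr>carrier = {g. invertible (snd g)},
           mult = (\<lambda>g h. (fst g + snd g *v fst h, snd g ** snd h)),
           one = (0, mat 1)\<rparr>"

definition e1 :: "real^2" where "e1 = vector [1, 0]"
definition e2 :: "real^2" where "e2 = vector [0, 1]"

definition Mgrp :: "aff set" where
  "Mgrp = generate AffE {(e1, mat 1), (e2, mat 1), (0, - mat 1)}"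

definition NM :: "aff set" where
  "NM = normalizer AffE Mgrp"

definition orbM :: "real^2 \<Rightarrow> (real^2) set" where
  "orbM x = (\<lambda>g. aff_app g x) ` Mgrp"

definition OrbSp :: "(real^2) set set" where
  "OrbSp = range orbM"

definition star :: "aff \<Rightarrow> (real^2) set \<Rightarrow> (real^2) set" where
  "star g = (\<lambda>P\<in>OrbSp. orbM (aff_app g (SOME x. x \<in> P)))"

definition AffM :: "((real^2) set \<Rightarrow> (real^2) set) monoid" where
  "AffM = \<lparr>carrier = star ` NM,
           mult = (\<lambda>f h. (\<lambda>P\<in>OrbSp. f (h P))),
           one = (\<lambda>P\<in>OrbSp. P)\<rparr>"

definition Kgrp :: "((real^2) set \<Rightarrow> (real^2) set) set" where
  "Kgrp = generate AffM {star ((1/2) *\<^sub>R e1, mat 1), star ((1/2) *\<^sub>R e2, mat 1)}"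

definition GL2Z :: "(real^2^2) monoid" where
  "GL2Z = \<lparr>carrier = {A. (\<forall>i j. A $ i $ j \<in> \<int>) \<and> (det A = 1 \<or> det A = -1)},
           mult = (\<lambda>A B. A ** B),
           one = mat 1\<rparr>"

definition PGL2Z :: "((real^2^2) set) monoid" where
  "PGL2Z = GL2Z Mod {mat 1, - mat 1}"

definition pm :: "(real^2^2) \<Rightarrow> (real^2^2) set" where
  "pm A = {mat 1, - mat 1} #>\<^bsub>GL2Z\<^esub> A"

end

theory Submission
  imports Defs
begin


definition isZ :: "real^2 \<Rightarrow> bool" where "isZ v \<longleftrightarrow> v$1 \<in> \<int> \<and> v$2 \<in> \<int>"
definition intM :: "real^2^2 \<Rightarrow> bool" where "intM A \<longleftrightarrow> (\<forall>i j. A$i$j \<in> \<int>)"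
definition amul :: "aff \<Rightarrow> aff \<Rightarrow> aff" where "amul g h = (fst g + snd g *v fst h, snd g ** snd h)"
definition adj2 :: "real^2^2 \<Rightarrow> real^2^2" where
 "adj2 A = (\<chi> i j. if i=1 then (if j=1 then A$2$2 else -A$1$2) else (if j=1 then -A$2$1 else A$1$1))"
definition inv2 :: "real^2^2 \<Rightarrow> real^2^2" where "inv2 A = det A *\<^sub>R adj2 A"

lemma adj2_right: "A ** adj2 A = det A *\<^sub>R mat 1"
  by (simp add: vec_eq_iff forall_2 matrix_matrix_mult_def sum_2 adj2_def det_2 mat_def algebra_simps)
lemma adj2_left: "adj2 A ** A = det A *\<^sub>R mat 1"
  by (simp add: vec_eq_iff forall_2 matrix_matrix_mult_def sum_2 adj2_def det_2 mat_def algebra_simps)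

lemma isZ_add[intro]: "isZ a \<Longrightarrow> isZ b \<Longrightarrow> isZ (a + b)" by (simp add: isZ_def)
lemma isZ_diff[intro]: "isZ a \<Longrightarrow> isZ b \<Longrightarrow> isZ (a - b)" by (simp add: isZ_def)
lemma isZ_uminus[intro]: "isZ a \<Longrightarrow> isZ (- a)" by (simp add: isZ_def)
lemma isZ_0[simp]: "isZ 0" by (simp add: isZ_def)
lemma isZ_e[simp]: "isZ e1" "isZ e2" by (simp_all add: isZ_def e1_def e2_def)
lemma mv_comp: "((A::real^2^2) *v v) $ i = A$i$1 * v$1 + A$i$2 * v$2"
  by (simp add: matrix_vector_mult_def sum_2)
lemma isZ_mv[intro]: "intM A \<Longrightarrow> isZ v \<Longrightarrow> isZ (A *v v)"
  by (simp add: isZ_def intM_def mv_comp)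
lemma intM_mult[intro]: "intM A \<Longrightarrow> intM B \<Longrightarrow> intM (A ** B)"
  by (simp add: intM_def matrix_matrix_mult_def sum_2)
lemma intM_neg[intro]: "intM A \<Longrightarrow> intM (- A)"
  by (simp add: intM_def)
lemma intM_I[simp]: "intM (mat 1)"
  by (simp add: intM_def mat_def)
lemma intM_adj2[intro]: "intM A \<Longrightarrow> intM (adj2 A)"
  by (auto simp add: intM_def adj2_def)
lemma intM_det: "intM A \<Longrightarrow> det A \<in> \<int>"
  by (simp add: intM_def det_2)
lemma intM_inv2[intro]: "intM A \<Longrightarrow> intM (inv2 A)"
  using intM_det[of A] by (auto simp add: intM_def inv2_def adj2_def)

lemma Ints_prod_1: "(x::real) \<in> \<int> \<Longrightarrow> y \<in> \<int> \<Longrightarrow> x * y = 1 \<Longrightarrow> x = 1 \<or> x = -1"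
proof -
  assume "x \<in> \<int>" "y \<in> \<int>" "x * y = 1"
  then obtain m n :: int where "x = of_int m" "y = of_int n" by (auto elim!: Ints_cases)
  with \<open>x*y=1\<close> have "m * n = 1" by (metis of_int_eq_1_iff of_int_mult)
  then have "m = 1 \<or> m = -1" using zmult_eq_1_iff by blast
  then show ?thesis using \<open>x = of_int m\<close> by auto
qed

lemma GLc_iff: "A \<in> carrier GL2Z \<longleftrightarrow> intM A \<and> (det A = 1 \<or> det A = -1)"
  by (simp add: GL2Z_def intM_def)

lemma inv2_left: "det A = 1 \<or> det A = -1 \<Longrightarrow> inv2 A ** A = mat 1"
proof -
  assume d: "det A = 1 \<or> det A = -1"
  have "inv2 A ** A = (det A * det A) *\<^sub>R mat 1"
    by (simp add: inv2_def scalar_matrix_assoc[symmetric] adj2_left)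
  moreover have "det A * det A = 1" using d by auto
  ultimately show ?thesis by simp
qed
lemma inv2_right: "det A = 1 \<or> det A = -1 \<Longrightarrow> A ** inv2 A = mat 1"
proof -
  assume d: "det A = 1 \<or> det A = -1"
  have "A ** inv2 A = (det A * det A) *\<^sub>R mat 1"
    by (simp add: inv2_def matrix_scalar_ac scalar_matrix_assoc[symmetric] adj2_right)
  moreover have "det A * det A = 1" using d by auto
  ultimately show ?thesis by simp
qed
lemma invertible_I: "invertible (mat 1 :: real^2^2)"
  unfolding invertible_def by (rule exI[of _ "mat 1"]) simp

lemma GL_mult: "A \<in> carrier GL2Z \<Longrightarrow> B \<in> carrier GL2Z \<Longrightarrow> A ** B \<in> carrier GL2Z"
  by (auto simp add: GLc_iff det_mul)
lemma GL_I[simp]: "mat 1 \<in> carrier GL2Z" by (simp add: GLc_iff)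
lemma GL_neg: "A \<in> carrier GL2Z \<Longrightarrow> - A \<in> carrier GL2Z"
  by (auto simp add: GLc_iff det_2)
lemma GL_inv2: "A \<in> carrier GL2Z \<Longrightarrow> inv2 A \<in> carrier GL2Z"
proof -
  assume a: "A \<in> carrier GL2Z"
  hence d: "det A = 1 \<or> det A = -1" by (simp add: GLc_iff)
  have "det (inv2 A) * det A = 1" using inv2_left[OF d] by (metis det_I det_mul)
  hence "det (inv2 A) = 1 \<or> det (inv2 A) = -1" using d by auto
  thus ?thesis using a by (auto simp add: GLc_iff)
qed
lemma GL_invertible: "A \<in> carrier GL2Z \<Longrightarrow> invertible A"
  by (metis GLc_iff invertible_left_inverse inv2_left)

lemma AffE_simps[simp]: "carrier AffE = {g. invertible (snd g)}" "mult AffE g h = amul g h" "one AffE = (0, mat 1)"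
  by (simp_all add: AffE_def amul_def)

lemma amul_assoc: "amul (amul g h) k = amul g (amul h k)"
  by (simp add: amul_def matrix_vector_mul_assoc matrix_vector_right_distrib matrix_mul_assoc algebra_simps)
lemma amul_one[simp]: "amul (0, mat 1) g = g" "amul g (0, mat 1) = g"
  by (simp_all add: amul_def)

lemma group_AffE: "group AffE"
proof (rule groupI)
  fix x assume "x \<in> carrier AffE"
  then obtain B where B: "B ** snd x = mat 1" by (auto simp: invertible_left_inverse)
  hence "invertible B" using invertible_left_inverse matrix_left_right_inverse by blast
  moreover have "amul (-(B *v fst x), B) x = (0, mat 1)"
    using B by (simp add: amul_def matrix_vector_mul_assoc)
  ultimately show "\<exists>y\<in>carrier AffE. y \<otimes>\<^bsub>AffE\<^esub> x = \<one>\<^bsub>AffE\<^esub>" by force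
qed (auto simp: amul_assoc invertible_mult invertible_I amul_def matrix_mul_assoc matrix_vector_mul_assoc matrix_vector_right_distrib)

lemma inv_AffE: "B ** A = mat 1 \<Longrightarrow> invertible A \<Longrightarrow> inv\<^bsub>AffE\<^esub> (a, A) = (-(B *v a), B)"
  apply (rule group.inv_equality[OF group_AffE])
  by (auto simp: amul_def matrix_vector_mul_assoc invertible_left_inverse matrix_left_right_inverse)



lemma negI_mult[simp]: "(- mat 1 :: real^2^2) ** Q = - Q" "Q ** (- mat 1 :: real^2^2) = - Q"
  by (simp_all add: vec_eq_iff forall_2 matrix_matrix_mult_def sum_2 mat_def)
lemma negI_mv[simp]: "(- mat 1 :: real^2^2) *v v = - v"
  by (simp add: vec_eq_iff forall_2 mv_comp mat_def)
lemma negI_ne[simp]: "(- mat 1 :: real^2^2) \<noteq> mat 1" "(mat 1 :: real^2^2) \<noteq> - mat 1"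
  by (simp_all add: vec_eq_iff mat_def)
lemma invertible_negI: "invertible (- mat 1 :: real^2^2)"
  unfolding invertible_def by (rule exI[of _ "- mat 1"]) simp

lemma isZ_uminus_iff[simp]: "isZ (- a) \<longleftrightarrow> isZ a" by (auto simp: isZ_def)

definition Mset :: "aff set" where
  "Mset = {g. isZ (fst g) \<and> (snd g = mat 1 \<or> snd g = - mat 1)}"

lemma Mset_carrier: "Mset \<subseteq> carrier AffE"
  by (auto simp: Mset_def invertible_I invertible_negI)

lemma Mgrp_sub: "Mgrp \<subseteq> Mset"
proof
  fix g assume "g \<in> Mgrp"
  then show "g \<in> Mset" unfolding Mgrp_def
  proof (induction rule: generate.induct)
    case one then show ?case by (simp add: Mset_def)
  next
    case (incl h) then show ?case by (auto simp: Mset_def)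
  next
    case (inv h)
    hence "h = (e1, mat 1) \<or> h = (e2, mat 1) \<or> h = (0, - mat 1)" by auto
    then show ?case
      using inv_AffE[of "mat 1" "mat 1" e1] inv_AffE[of "mat 1" "mat 1" e2]
        inv_AffE[of "- mat 1" "- mat 1" 0]
      by (auto simp: invertible_I invertible_negI Mset_def)
  next
    case (eng h1 h2) then show ?case
      by (auto simp: Mset_def amul_def)
  qed
qed

lemma Mset_sub: "Mset \<subseteq> Mgrp"
proof -
  let ?G = "generate AffE {(e1, mat 1), (e2, mat 1), (0, - mat 1)}"
  have sg: "subgroup ?G AffE"
    by (rule group.generate_is_subgroup[OF group_AffE]) (auto simp: invertible_I invertible_negI)
  have g1: "(e1, mat 1) \<in> ?G" "(e2, mat 1) \<in> ?G" "(0, - mat 1) \<in> ?G"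
    by (auto intro: generate.incl)
  have g1i: "(-e1, mat 1) \<in> ?G" "(-e2, mat 1) \<in> ?G"
    using generate.inv[of "(e1, mat 1)" "{(e1, mat 1), (e2, mat 1), (0, - mat 1)}" AffE]
      generate.inv[of "(e2, mat 1)" "{(e1, mat 1), (e2, mat 1), (0, - mat 1)}" AffE]
      inv_AffE[of "mat 1" "mat 1" e1] inv_AffE[of "mat 1" "mat 1" e2]
    by (auto simp: invertible_I)
  have step: "(v + w, mat 1) \<in> ?G" if "(v, mat 1) \<in> ?G" "(w, mat 1) \<in> ?G" for v w
    using subgroup.m_closed[OF sg that] by (simp add: amul_def)
  have Tj: "(of_int j *\<^sub>R e2, mat 1) \<in> ?G" for j
  proof (induction j rule: int_induct[where k=0])
    case base then show ?case using generate.one[of AffE] by simp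
  next
    case (step1 i) then show ?case using step[OF step1(2) g1(2)] by (simp add: algebra_simps)
  next
    case (step2 i) then show ?case using step[OF step2(2) g1i(2)] by (simp add: algebra_simps)
  qed
  have T: "(of_int i *\<^sub>R e1 + of_int j *\<^sub>R e2, mat 1) \<in> ?G" for i j
  proof (induction i rule: int_induct[where k=0])
    case base then show ?case using Tj by simp
  next
    case (step1 i) then show ?case using step[OF step1(2) g1(1)] by (simp add: algebra_simps)
  next
    case (step2 i) then show ?case using step[OF step2(2) g1i(1)] by (simp add: algebra_simps)
  qed
  show ?thesis
  proof
    fix g assume "g \<in> Mset"
    then obtain n E where g: "g = (n, E)" "isZ n" "E = mat 1 \<or> E = - mat 1"
      by (cases g) (auto simp: Mset_def)
    obtain i j where ij: "n$1 = of_int i" "n$2 = of_int j"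
      using g(2) by (auto simp: isZ_def elim!: Ints_cases)
    have "n = of_int i *\<^sub>R e1 + of_int j *\<^sub>R e2"
      using ij by (simp add: vec_eq_iff forall_2 e1_def e2_def)
    hence nI: "(n, mat 1) \<in> ?G" using T by simp
    show "g \<in> Mgrp"
    proof (cases "E = mat 1")
      case True then show ?thesis using nI g by (simp add: Mgrp_def)
    next
      case False
      hence "E = - mat 1" using g by auto
      moreover have "amul (n, mat 1) (0, - mat 1) \<in> ?G"
        using subgroup.m_closed[OF sg nI g1(3)] by simp
      ultimately show ?thesis using g by (simp add: Mgrp_def amul_def)
    qed
  qed
qed

lemma Mgrp_eq: "Mgrp = Mset" using Mgrp_sub Mset_sub by blast



definition NC :: "aff set" where "NC = {g. isZ (2 *\<^sub>R fst g) \<and> snd g \<in> carrier GL2Z}"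

lemma coset_mem: "x \<in> g <#\<^bsub>AffE\<^esub> H #>\<^bsub>AffE\<^esub> h \<longleftrightarrow> (\<exists>m\<in>H. x = amul (amul g m) h)"
  by (auto simp: l_coset_def r_coset_def)

lemma NM_iff: "g \<in> NM \<longleftrightarrow> invertible (snd g) \<and> g <#\<^bsub>AffE\<^esub> Mset #>\<^bsub>AffE\<^esub> inv\<^bsub>AffE\<^esub> g = Mset"
  unfolding NM_def normalizer_def stabilizer_def Mgrp_eq using Mset_carrier by auto

lemma mv_neg: "(A::real^2^2) *v (- v) = - (A *v v)"
  by (simp add: vec_eq_iff forall_2 mv_comp)

lemma mneg_mv[simp]: "(- A::real^2^2) *v v = - (A *v v)"
  by (simp add: vec_eq_iff forall_2 mv_comp)
lemma mneg_mult[simp]: "(- A::real^2^2) ** B = - (A ** B)" "B ** (- A::real^2^2) = - (B ** A)"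
  by (simp_all add: vec_eq_iff forall_2 matrix_matrix_mult_def sum_2)

lemma conj_formula:
  assumes "B ** A = mat 1" "invertible A"
  shows "amul (amul (a,A) (n, mat 1)) (-(B *v a), B) = (A *v n, mat 1)"
    "amul (amul (a,A) (n, - mat 1)) (-(B *v a), B) = (2 *\<^sub>R a + A *v n, - mat 1)"
proof -
  have AB: "A ** B = mat 1" using assms matrix_left_right_inverse by blast
  show "amul (amul (a,A) (n, mat 1)) (-(B *v a), B) = (A *v n, mat 1)"
    using AB by (simp add: amul_def matrix_vector_mul_assoc mv_neg)
  show "amul (amul (a,A) (n, - mat 1)) (-(B *v a), B) = (2 *\<^sub>R a + A *v n, - mat 1)"
    using AB by (simp add: amul_def matrix_vector_mul_assoc mv_neg scaleR_2)
qed

lemma col_int: "isZ (A *v e1) \<Longrightarrow> isZ (A *v e2) \<Longrightarrow> intM A"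
  by (auto simp: isZ_def intM_def mv_comp e1_def e2_def forall_2)

lemma NC_sub_NM: "NC \<subseteq> NM"
proof
  fix g assume "g \<in> NC"
  then obtain a A where g: "g = (a, A)" "isZ (2 *\<^sub>R a)" "A \<in> carrier GL2Z"
    by (cases g) (auto simp: NC_def)
  define B where "B = inv2 A"
  have d: "det A = 1 \<or> det A = -1" and iA: "intM A" using g by (auto simp: GLc_iff)
  have BA: "B ** A = mat 1" using inv2_left[OF d] B_def by simp
  have AB: "A ** B = mat 1" using inv2_right[OF d] B_def by simp
  have iB: "intM B" using iA B_def by auto
  have invA: "invertible A" using GL_invertible g by simp
  have ig: "inv\<^bsub>AffE\<^esub> g = (-(B *v a), B)" using inv_AffE[OF BA invA] g by simp
  have "g <#\<^bsub>AffE\<^esub> Mset #>\<^bsub>AffE\<^esub> inv\<^bsub>AffE\<^esub> g = Mset"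
  proof (rule Set.set_eqI)
    fix x
    show "x \<in> g <#\<^bsub>AffE\<^esub> Mset #>\<^bsub>AffE\<^esub> inv\<^bsub>AffE\<^esub> g \<longleftrightarrow> x \<in> Mset"
      unfolding coset_mem ig
    proof
      assume "\<exists>m\<in>Mset. x = amul (amul g m) (- (B *v a), B)"
      then obtain m where m0: "m \<in> Mset" "x = amul (amul g m) (- (B *v a), B)" by blast
      obtain n E where "m = (n, E)" by (cases m)
      hence m: "isZ n" "E = mat 1 \<or> E = - mat 1" "x = amul (amul g (n,E)) (- (B *v a), B)"
        using m0 by (auto simp: Mset_def)
      show "x \<in> Mset" using m conj_formula[OF BA invA, of a n] g iA by (auto simp: Mset_def intro!: isZ_add isZ_mv)
    next
      assume "x \<in> Mset"
      then obtain k E where x: "x = (k, E)" "isZ k" "E = mat 1 \<or> E = - mat 1"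
        by (cases x) (auto simp: Mset_def)
      show "\<exists>m\<in>Mset. x = amul (amul g m) (- (B *v a), B)"
      proof (cases "E = mat 1")
        case True
        have "x = amul (amul g (B *v k, mat 1)) (- (B *v a), B)"
          using conj_formula[OF BA invA, of a "B *v k"] g x True AB by (simp add: matrix_vector_mul_assoc)
        moreover have "(B *v k, mat 1) \<in> Mset" using iB x by (auto simp: Mset_def)
        ultimately show ?thesis by blast
      next
        case False
        hence E: "E = - mat 1" using x by auto
        have "x = amul (amul g (B *v (k - 2 *\<^sub>R a), - mat 1)) (- (B *v a), B)"
          using conj_formula[OF BA invA, of a "B *v (k - 2 *\<^sub>R a)"] g x E AB
          by (simp add: matrix_vector_mul_assoc)
        moreover have "(B *v (k - 2 *\<^sub>R a), - mat 1) \<in> Mset" using iB x g by (auto simp: Mset_def)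
        ultimately show ?thesis by blast
      qed
    qed
  qed
  then have "invertible (snd g) \<and> g <#\<^bsub>AffE\<^esub> Mset #>\<^bsub>AffE\<^esub> inv\<^bsub>AffE\<^esub> g = Mset"
    using invA g by simp
  then show "g \<in> NM" by (rule NM_iff[THEN iffD2])
qed

lemma NM_sub_NC: "NM \<subseteq> NC"
proof
  fix g assume gN: "g \<in> NM"
  obtain a A where g: "g = (a, A)" by (cases g)
  have invA: "invertible A" and S: "g <#\<^bsub>AffE\<^esub> Mset #>\<^bsub>AffE\<^esub> inv\<^bsub>AffE\<^esub> g = Mset"
  proof -
    have "invertible (snd g) \<and> g <#\<^bsub>AffE\<^esub> Mset #>\<^bsub>AffE\<^esub> inv\<^bsub>AffE\<^esub> g = Mset"
      using gN by (rule NM_iff[THEN iffD1])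
    then show "invertible A" "g <#\<^bsub>AffE\<^esub> Mset #>\<^bsub>AffE\<^esub> inv\<^bsub>AffE\<^esub> g = Mset"
      using g by auto
  qed
  obtain B where BA: "B ** A = mat 1" using invA invertible_left_inverse by blast
  have AB: "A ** B = mat 1" using BA matrix_left_right_inverse by blast
  have ig: "inv\<^bsub>AffE\<^esub> g = (-(B *v a), B)" using inv_AffE[OF BA invA] g by simp
  have ig': "inv\<^bsub>AffE\<^esub> (a, A) = (-(B *v a), B)" using inv_AffE[OF BA invA] by simp
  have S': "x \<in> Mset \<longleftrightarrow> (\<exists>m\<in>Mset. x = amul (amul (a,A) m) (- (B *v a), B))" for x
  proof -
    have "x \<in> Mset \<longleftrightarrow> x \<in> g <#\<^bsub>AffE\<^esub> Mset #>\<^bsub>AffE\<^esub> inv\<^bsub>AffE\<^esub> g"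
      by (simp only: S)
    also have "\<dots> \<longleftrightarrow> (\<exists>m\<in>Mset. x = amul (amul g m) (inv\<^bsub>AffE\<^esub> g))" by (rule coset_mem)
    finally show ?thesis unfolding ig' g .
  qed
  have fw: "isZ (A *v v)" if "isZ v" for v
  proof -
    have "(v, mat 1) \<in> Mset" using that by (simp add: Mset_def)
    hence "(A *v v, mat 1) \<in> Mset" using conj_formula[OF BA invA, of a v]
      by (intro S'[THEN iffD2]) (metis)
    thus ?thesis by (simp add: Mset_def)
  qed
  have bw: "isZ (B *v v)" if "isZ v" for v
  proof -
    have "(v, mat 1) \<in> Mset" using that by (simp add: Mset_def)
    then obtain m where m0: "m \<in> Mset" "(v, mat 1) = amul (amul (a,A) m) (- (B *v a), B)"
      using S'[of "(v, mat 1)", THEN iffD1] by blast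
    obtain n E where "m = (n, E)" by (cases m)
    hence m: "isZ n" "E = mat 1 \<or> E = - mat 1"
      "(v, mat 1) = amul (amul (a,A) (n,E)) (- (B *v a), B)"
      using m0 by (auto simp: Mset_def)
    have "E = mat 1" using m conj_formula[OF BA invA, of a n] by auto
    hence "v = A *v n" using m conj_formula[OF BA invA, of a n] by simp
    hence "B *v v = n" using BA by (simp add: matrix_vector_mul_assoc)
    thus ?thesis using m by simp
  qed
  have iA: "intM A" by (rule col_int) (auto intro: fw)
  have iB: "intM B" by (rule col_int) (auto intro: bw)
  have "(0, - mat 1) \<in> Mset" by (simp add: Mset_def)
  hence "(2 *\<^sub>R a + A *v 0, - mat 1) \<in> Mset" using conj_formula[OF BA invA, of a 0]
    by (intro S'[THEN iffD2]) (metis)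
  hence a2: "isZ (2 *\<^sub>R a)" by (simp add: Mset_def)
  have "det A * det B = 1" using AB by (metis det_I det_mul)
  hence "det A = 1 \<or> det A = -1" using Ints_prod_1 intM_det iA iB by blast
  thus "g \<in> NC" using g a2 iA by (simp add: NC_def GLc_iff)
qed

lemma NM_eq: "NM = NC" using NM_sub_NC NC_sub_NM by blast



lemma orb_mem: "y \<in> orbM x \<longleftrightarrow> (\<exists>n. isZ n \<and> (y = n + x \<or> y = n - x))"
proof
  assume "y \<in> orbM x"
  then obtain g where g: "g \<in> Mset" "y = fst g + snd g *v x"
    unfolding orbM_def Mgrp_eq aff_app_def by blast
  then show "\<exists>n. isZ n \<and> (y = n + x \<or> y = n - x)"
    by (auto simp: Mset_def)
next
  assume "\<exists>n. isZ n \<and> (y = n + x \<or> y = n - x)"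
  then obtain n where n: "isZ n" "y = n + x \<or> y = n - x" by blast
  then show "y \<in> orbM x"
  proof (elim disjE)
    assume "y = n + x"
    then have "y = aff_app (n, mat 1) x" by (simp add: aff_app_def)
    moreover have "(n, mat 1) \<in> Mgrp" using n by (simp add: Mgrp_eq Mset_def)
    ultimately show ?thesis unfolding orbM_def by blast
  next
    assume "y = n - x"
    then have "y = aff_app (n, - mat 1) x" by (simp add: aff_app_def)
    moreover have "(n, - mat 1) \<in> Mgrp" using n by (simp add: Mgrp_eq Mset_def)
    ultimately show ?thesis unfolding orbM_def by blast
  qed
qed

lemma orb_self: "x \<in> orbM x"
  unfolding orb_mem by (rule exI[of _ 0]) simp

lemma orb_trans: "y \<in> orbM x \<Longrightarrow> z \<in> orbM y \<Longrightarrow> z \<in> orbM x"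
proof -
  assume "y \<in> orbM x" "z \<in> orbM y"
  then obtain n m where n: "isZ n" "y = n + x \<or> y = n - x" and m: "isZ m" "z = m + y \<or> z = m - y"
    unfolding orb_mem by blast
  show "z \<in> orbM x" unfolding orb_mem
  proof (cases "z = m + y")
    case True
    then show "\<exists>k. isZ k \<and> (z = k + x \<or> z = k - x)"
      using n m by (intro exI[of _ "m + n"]) (auto simp: algebra_simps)
  next
    case False
    then show "\<exists>k. isZ k \<and> (z = k + x \<or> z = k - x)"
      using n m by (intro exI[of _ "m - n"]) (auto simp: algebra_simps)
  qed
qed

lemma orb_sym: "y \<in> orbM x \<Longrightarrow> x \<in> orbM y"
proof -
  assume "y \<in> orbM x"
  then obtain n where n: "isZ n" "y = n + x \<or> y = n - x" unfolding orb_mem by blast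
  show "x \<in> orbM y" unfolding orb_mem
  proof (cases "y = n + x")
    case True
    then show "\<exists>k. isZ k \<and> (x = k + y \<or> x = k - y)"
      using n by (intro exI[of _ "- n"]) (auto simp: algebra_simps)
  next
    case False
    then show "\<exists>k. isZ k \<and> (x = k + y \<or> x = k - y)"
      using n by (intro exI[of _ "n"]) (auto simp: algebra_simps)
  qed
qed

lemma orb_eq: "y \<in> orbM x \<Longrightarrow> orbM y = orbM x"
  by (meson orb_sym orb_trans subsetI subset_antisym)

lemma aff_app_amul: "aff_app (amul g h) x = aff_app g (aff_app h x)"
  by (simp add: aff_app_def amul_def matrix_vector_mul_assoc matrix_vector_right_distrib add.assoc)

lemma NC_iff: "(a, A) \<in> NC \<longleftrightarrow> isZ (2 *\<^sub>R a) \<and> A \<in> carrier GL2Z"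
  by (simp add: NC_def)

lemma NC_orb: "g \<in> NC \<Longrightarrow> y \<in> orbM x \<Longrightarrow> aff_app g y \<in> orbM (aff_app g x)"
proof -
  assume gN: "g \<in> NC" and "y \<in> orbM x"
  then obtain n where n: "isZ n" "y = n + x \<or> y = n - x" unfolding orb_mem by blast
  obtain a A where g: "g = (a, A)" by (cases g)
  have a2: "isZ (2 *\<^sub>R a)" and iA: "intM A" using gN g by (auto simp: NC_def GLc_iff)
  show ?thesis unfolding orb_mem
  proof (cases "y = n + x")
    case True
    then show "\<exists>k. isZ k \<and> (aff_app g y = k + aff_app g x \<or> aff_app g y = k - aff_app g x)"
      using n iA by (intro exI[of _ "A *v n"])
        (auto simp: g aff_app_def matrix_vector_right_distrib algebra_simps)
  next
    case False
    hence y: "y = n - x" using n by auto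
    have "aff_app g y = (2 *\<^sub>R a + A *v n) - aff_app g x"
      by (simp add: g y aff_app_def matrix_vector_mult_diff_distrib scaleR_2 algebra_simps)
    moreover have "isZ (2 *\<^sub>R a + A *v n)" using a2 iA n by auto
    ultimately show "\<exists>k. isZ k \<and> (aff_app g y = k + aff_app g x \<or> aff_app g y = k - aff_app g x)"
      by blast
  qed
qed

lemma orbM_in: "orbM x \<in> OrbSp" by (simp add: OrbSp_def)

lemma star_orb: "g \<in> NC \<Longrightarrow> star g (orbM x) = orbM (aff_app g x)"
proof -
  assume gN: "g \<in> NC"
  have s: "(SOME y. y \<in> orbM x) \<in> orbM x" using someI[of "\<lambda>y. y \<in> orbM x" x] orb_self by blast
  have "star g (orbM x) = orbM (aff_app g (SOME y. y \<in> orbM x))"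
    by (simp add: star_def orbM_in)
  also have "\<dots> = orbM (aff_app g x)" by (rule orb_eq[OF NC_orb[OF gN s]])
  finally show ?thesis .
qed

lemma star_out: "P \<notin> OrbSp \<Longrightarrow> star g P = undefined"
  by (simp add: star_def)

lemma OrbSp_cases: "P \<in> OrbSp \<Longrightarrow> (\<And>x. P = orbM x \<Longrightarrow> thesis) \<Longrightarrow> thesis"
  by (auto simp: OrbSp_def)

lemma star_eqI: "(\<And>x. star g (orbM x) = star h (orbM x)) \<Longrightarrow> star g = star h"
proof
  fix P assume e: "\<And>x. star g (orbM x) = star h (orbM x)"
  show "star g P = star h P"
  proof (cases "P \<in> OrbSp")
    case True then show ?thesis using e by (auto elim: OrbSp_cases)
  next
    case False then show ?thesis by (simp add: star_out)
  qed
qed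

lemma NC_amul: "g \<in> NC \<Longrightarrow> h \<in> NC \<Longrightarrow> amul g h \<in> NC"
proof -
  assume "g \<in> NC" "h \<in> NC"
  then obtain a A b B where g: "g = (a, A)" "isZ (2 *\<^sub>R a)" "A \<in> carrier GL2Z"
    and h: "h = (b, B)" "isZ (2 *\<^sub>R b)" "B \<in> carrier GL2Z"
    by (cases g, cases h) (auto simp: NC_def)
  have "2 *\<^sub>R (a + A *v b) = 2 *\<^sub>R a + A *v (2 *\<^sub>R b)"
    by (simp add: matrix_vector_mult_scaleR scaleR_right_distrib)
  moreover have "isZ (2 *\<^sub>R a + A *v (2 *\<^sub>R b))" using g h by (auto simp: GLc_iff)
  ultimately show ?thesis using g h GL_mult by (simp add: amul_def NC_def)
qed

lemma NC_one: "(0, mat 1) \<in> NC" by (simp add: NC_def)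

definition ainv :: "aff \<Rightarrow> aff" where "ainv g = (-(inv2 (snd g) *v fst g), inv2 (snd g))"

lemma NC_ainv: "g \<in> NC \<Longrightarrow> ainv g \<in> NC \<and> amul (ainv g) g = (0, mat 1) \<and> amul g (ainv g) = (0, mat 1)"
proof -
  assume "g \<in> NC"
  then obtain a A where g: "g = (a, A)" "isZ (2 *\<^sub>R a)" "A \<in> carrier GL2Z"
    by (cases g) (auto simp: NC_def)
  have d: "det A = 1 \<or> det A = -1" and iA: "intM A" using g by (auto simp: GLc_iff)
  have "2 *\<^sub>R (- (inv2 A *v a)) = - (inv2 A *v (2 *\<^sub>R a))"
    by (simp add: matrix_vector_mult_scaleR)
  moreover have "isZ (- (inv2 A *v (2 *\<^sub>R a)))" using g iA by auto
  ultimately have "ainv g \<in> NC" using g GL_inv2 by (simp add: ainv_def NC_def)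
  moreover have "amul (ainv g) g = (0, mat 1)"
    using inv2_left[OF d] by (simp add: g ainv_def amul_def matrix_vector_mul_assoc)
  moreover have "amul g (ainv g) = (0, mat 1)"
    using inv2_right[OF d] by (simp add: g ainv_def amul_def matrix_vector_mul_assoc mv_neg)
  ultimately show ?thesis by blast
qed

lemma AffM_simps: "carrier AffM = star ` NC" "one AffM = (\<lambda>P\<in>OrbSp. P)"
  "mult AffM f h = (\<lambda>P\<in>OrbSp. f (h P))"
  by (simp_all add: AffM_def NM_eq)

lemma star_mult: "g \<in> NC \<Longrightarrow> h \<in> NC \<Longrightarrow> star g \<otimes>\<^bsub>AffM\<^esub> star h = star (amul g h)"
proof
  fix P assume gN: "g \<in> NC" and hN: "h \<in> NC"
  show "(star g \<otimes>\<^bsub>AffM\<^esub> star h) P = star (amul g h) P"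
  proof (cases "P \<in> OrbSp")
    case True
    then obtain x where P: "P = orbM x" by (auto elim: OrbSp_cases)
    have "(star g \<otimes>\<^bsub>AffM\<^esub> star h) P = star g (star h (orbM x))"
      using True by (simp add: AffM_simps P)
    also have "\<dots> = orbM (aff_app g (aff_app h x))" by (simp add: star_orb gN hN)
    also have "\<dots> = star (amul g h) P" by (simp add: P star_orb NC_amul gN hN aff_app_amul)
    finally show ?thesis .
  next
    case False then show ?thesis by (simp add: AffM_simps star_out)
  qed
qed

lemma star_one: "one AffM = star (0, mat 1)"
proof
  fix P show "one AffM P = star (0, mat 1) P"
  proof (cases "P \<in> OrbSp")
    case True
    then obtain x where P: "P = orbM x" by (auto elim: OrbSp_cases)
    show ?thesis using True by (simp add: AffM_simps P star_orb NC_one aff_app_def)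
  next
    case False then show ?thesis by (simp add: AffM_simps star_out)
  qed
qed

lemma group_AffM: "group AffM"
proof (rule groupI)
  show "\<one>\<^bsub>AffM\<^esub> \<in> carrier AffM" by (simp add: star_one AffM_simps(1) NC_one)
next
  fix f h assume "f \<in> carrier AffM" "h \<in> carrier AffM"
  then obtain g k where "g \<in> NC" "k \<in> NC" "f = star g" "h = star k" by (auto simp: AffM_simps(1))
  then show "f \<otimes>\<^bsub>AffM\<^esub> h \<in> carrier AffM" by (simp add: star_mult NC_amul AffM_simps(1))
next
  fix f h l assume "f \<in> carrier AffM" "h \<in> carrier AffM" "l \<in> carrier AffM"
  then obtain g k m where "g \<in> NC" "k \<in> NC" "m \<in> NC" "f = star g" "h = star k" "l = star m"
    by (auto simp: AffM_simps(1))
  then show "f \<otimes>\<^bsub>AffM\<^esub> h \<otimes>\<^bsub>AffM\<^esub> l = f \<otimes>\<^bsub>AffM\<^esub> (h \<otimes>\<^bsub>AffM\<^esub> l)"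
    by (simp add: star_mult NC_amul amul_assoc)
next
  fix f assume "f \<in> carrier AffM"
  then obtain g where "g \<in> NC" "f = star g" by (auto simp: AffM_simps(1))
  then show "\<one>\<^bsub>AffM\<^esub> \<otimes>\<^bsub>AffM\<^esub> f = f" by (simp add: star_one star_mult NC_one)
next
  fix f assume "f \<in> carrier AffM"
  then obtain g where g: "g \<in> NC" "f = star g" by (auto simp: AffM_simps(1))
  have "star (ainv g) \<in> carrier AffM" using NC_ainv[OF g(1)] by (simp add: AffM_simps(1))
  moreover have "star (ainv g) \<otimes>\<^bsub>AffM\<^esub> f = \<one>\<^bsub>AffM\<^esub>"
    using NC_ainv[OF g(1)] g by (simp add: star_mult star_one)
  ultimately show "\<exists>y\<in>carrier AffM. y \<otimes>\<^bsub>AffM\<^esub> f = \<one>\<^bsub>AffM\<^esub>" by blast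
qed

lemma inv_star: "g \<in> NC \<Longrightarrow> inv\<^bsub>AffM\<^esub> (star g) = star (ainv g)"
  by (rule group.inv_equality[OF group_AffM]) (auto simp: NC_ainv star_mult star_one AffM_simps(1))



lemma Zvecs_countable: "countable {v::real^2. isZ v}"
proof (rule countable_subset)
  show "{v::real^2. isZ v} \<subseteq> (\<lambda>p::int\<times>int. (\<chi> i. if i = 1 then of_int (fst p) else of_int (snd p))) ` UNIV"
  proof
    fix v :: "real^2" assume "v \<in> {v. isZ v}"
    then obtain i j where ij: "v$1 = of_int i" "v$2 = of_int j" by (auto simp: isZ_def elim!: Ints_cases)
    have "v = (\<chi> k. if k = 1 then of_int (fst (i,j)) else of_int (snd (i,j)))"
      using ij by (simp add: vec_eq_iff forall_2)
    then show "v \<in> (\<lambda>p::int\<times>int. (\<chi> i. if i = 1 then of_int (fst p) else of_int (snd p))) ` UNIV"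
      by blast
  qed
qed simp

lemma line_countable: "v \<noteq> 0 \<Longrightarrow> countable {t::real. isZ (t *\<^sub>R v + c)}"
proof -
  assume v: "v \<noteq> 0"
  have inj: "inj_on (\<lambda>t. t *\<^sub>R v + c) {t::real. isZ (t *\<^sub>R v + c)}"
    using v by (auto simp: inj_on_def)
  have "(\<lambda>t. t *\<^sub>R v + c) ` {t::real. isZ (t *\<^sub>R v + c)} \<subseteq> {v. isZ v}" by auto
  hence "countable ((\<lambda>t. t *\<^sub>R v + c) ` {t::real. isZ (t *\<^sub>R v + c)})"
    using countable_subset Zvecs_countable by blast
  thus ?thesis using countable_image_inj_on inj by blast
qed

lemma mat_zeroI: "(\<And>u. (C::real^2^2) *v u = 0) \<Longrightarrow> C = 0"
  by (subst matrix_eq) simp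

lemma critL:
  fixes C D :: "real^2^2"
  assumes H: "\<And>x. isZ (C *v x + c) \<or> isZ (D *v x + d)"
  shows "(C = 0 \<and> isZ c) \<or> (D = 0 \<and> isZ d)"
proof -
  have s1: "C *v u = 0 \<or> D *v u = 0" for u
  proof (rule ccontr)
    assume "\<not> (C *v u = 0 \<or> D *v u = 0)"
    hence nz: "C *v u \<noteq> 0" "D *v u \<noteq> 0" by auto
    have "UNIV \<subseteq> {t. isZ (t *\<^sub>R (C *v u) + c)} \<union> {t. isZ (t *\<^sub>R (D *v u) + d)}"
    proof
      fix t :: real
      have "isZ (C *v (t *\<^sub>R u) + c) \<or> isZ (D *v (t *\<^sub>R u) + d)" by (rule H)
      thus "t \<in> {t. isZ (t *\<^sub>R (C *v u) + c)} \<union> {t. isZ (t *\<^sub>R (D *v u) + d)}"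
        by (simp add: matrix_vector_mult_scaleR)
    qed
    moreover have "countable ({t. isZ (t *\<^sub>R (C *v u) + c)} \<union> {t. isZ (t *\<^sub>R (D *v u) + d)})"
      using line_countable nz by blast
    ultimately have "countable (UNIV :: real set)" using countable_subset by blast
    thus False using uncountable_UNIV_real by blast
  qed
  have s2: "C = 0 \<or> D = 0"
  proof (rule ccontr)
    assume "\<not> (C = 0 \<or> D = 0)"
    then obtain u w where u: "C *v u \<noteq> 0" and w: "D *v w \<noteq> 0" using mat_zeroI by blast
    have "D *v u = 0" using s1 u by blast
    moreover have "C *v w = 0" using s1 w by blast
    ultimately have "C *v (u + w) \<noteq> 0" "D *v (u + w) \<noteq> 0"
      using u w by (simp_all add: matrix_vector_right_distrib)
    thus False using s1 by blast
  qed
  show ?thesis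
  proof (cases "C = 0")
    case C: True
    show ?thesis
    proof (cases "isZ c")
      case True with C show ?thesis by blast
    next
      case False
      hence Hd: "isZ (D *v x + d)" for x using H[of x] C by simp
      have "D = 0"
      proof (rule ccontr)
        assume "D \<noteq> 0"
        then obtain u where u: "D *v u \<noteq> 0" using mat_zeroI by blast
        have "UNIV \<subseteq> {t. isZ (t *\<^sub>R (D *v u) + d)}"
          using Hd[of "_ *\<^sub>R u"] by (auto simp: matrix_vector_mult_scaleR)
        hence "countable (UNIV :: real set)" using countable_subset line_countable[OF u] by blast
        thus False using uncountable_UNIV_real by blast
      qed
      thus ?thesis using Hd[of 0] by simp
    qed
  next
    case C: False
    hence D: "D = 0" using s2 by blast
    show ?thesis
    proof (cases "isZ d")
      case True with D show ?thesis by blast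
    next
      case False
      hence Hc: "isZ (C *v x + c)" for x using H[of x] D by simp
      have "C = 0"
      proof (rule ccontr)
        assume "C \<noteq> 0"
        then obtain u where u: "C *v u \<noteq> 0" using mat_zeroI by blast
        have "UNIV \<subseteq> {t. isZ (t *\<^sub>R (C *v u) + c)}"
          using Hc[of "_ *\<^sub>R u"] by (auto simp: matrix_vector_mult_scaleR)
        hence "countable (UNIV :: real set)" using countable_subset line_countable[OF u] by blast
        thus False using uncountable_UNIV_real by blast
      qed
      thus ?thesis using C by blast
    qed
  qed
qed

lemma mv_add_r: "((B::real^2^2) + A) *v x = B *v x + A *v x"
  by (simp add: vec_eq_iff forall_2 mv_comp algebra_simps)
lemma mv_diff_r: "((B::real^2^2) - A) *v x = B *v x - A *v x"
  by (simp add: vec_eq_iff forall_2 mv_comp algebra_simps)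

lemma star_eq_iff:
  assumes g: "(a, A) \<in> NC" and h: "(b, B) \<in> NC"
  shows "star (a, A) = star (b, B) \<longleftrightarrow> (B = A \<and> isZ (b - a)) \<or> (B = - A \<and> isZ (b + a))"
proof
  assume e: "star (a, A) = star (b, B)"
  have "isZ ((B - A) *v x + (b - a)) \<or> isZ ((B + A) *v x + (b + a))" for x
  proof -
    have "orbM (aff_app (a, A) x) = orbM (aff_app (b, B) x)"
      using e star_orb[OF g, of x] star_orb[OF h, of x] by simp
    hence "aff_app (b, B) x \<in> orbM (aff_app (a, A) x)" using orb_self by metis
    then obtain n where n: "isZ n" "b + B *v x = n + (a + A *v x) \<or> b + B *v x = n - (a + A *v x)"
      unfolding orb_mem aff_app_def by auto
    show ?thesis
    proof (cases "b + B *v x = n + (a + A *v x)")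
      case True
      hence "(B - A) *v x + (b - a) = n" by (simp add: mv_diff_r algebra_simps)
      thus ?thesis using n by simp
    next
      case False
      hence "b + B *v x = n - (a + A *v x)" using n by auto
      hence "(B + A) *v x + (b + a) = n" by (simp add: mv_add_r algebra_simps)
      thus ?thesis using n by simp
    qed
  qed
  then have "(B - A = 0 \<and> isZ (b - a)) \<or> (B + A = 0 \<and> isZ (b + a))" by (rule critL)
  then show "(B = A \<and> isZ (b - a)) \<or> (B = - A \<and> isZ (b + a))"
    by (metis add.commute add_eq_0_iff eq_iff_diff_eq_0)
next
  assume c: "(B = A \<and> isZ (b - a)) \<or> (B = - A \<and> isZ (b + a))"
  show "star (a, A) = star (b, B)"
  proof (rule star_eqI)
    fix x
    have "aff_app (b, B) x \<in> orbM (aff_app (a, A) x)"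
      unfolding orb_mem aff_app_def
    proof (cases "B = A \<and> isZ (b - a)")
      case True
      then show "\<exists>n. isZ n \<and> (fst (b, B) + snd (b, B) *v x = n + (fst (a, A) + snd (a, A) *v x) \<or>
          fst (b, B) + snd (b, B) *v x = n - (fst (a, A) + snd (a, A) *v x))"
        by (intro exI[of _ "b - a"]) (auto simp: algebra_simps)
    next
      case False
      hence "B = - A" "isZ (b + a)" using c by auto
      then show "\<exists>n. isZ n \<and> (fst (b, B) + snd (b, B) *v x = n + (fst (a, A) + snd (a, A) *v x) \<or>
          fst (b, B) + snd (b, B) *v x = n - (fst (a, A) + snd (a, A) *v x))"
        by (intro exI[of _ "b + a"]) (auto simp: algebra_simps)
    qed
    then show "star (a, A) (orbM x) = star (b, B) (orbM x)"
      using star_orb[OF g, of x] star_orb[OF h, of x] orb_eq by metis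
  qed
qed



definition kv :: "int \<Rightarrow> int \<Rightarrow> real^2" where
  "kv i j = (of_int i / 2) *\<^sub>R e1 + (of_int j / 2) *\<^sub>R e2"
definition kel :: "int \<Rightarrow> int \<Rightarrow> (real^2) set \<Rightarrow> (real^2) set" where
  "kel i j = star (kv i j, mat 1)"

lemma kv_comp[simp]: "kv i j $ 1 = of_int i / 2" "kv i j $ 2 = of_int j / 2"
  by (simp_all add: kv_def e1_def e2_def)

lemma kv_NC: "(kv i j, mat 1) \<in> NC"
  by (simp add: NC_def isZ_def)

lemma half_int: "(of_int k / 2 :: real) \<in> \<int> \<longleftrightarrow> even k"
proof
  assume "of_int k / 2 \<in> (\<int> :: real set)"
  then obtain m where "of_int k / 2 = (of_int m :: real)" by (auto elim!: Ints_cases)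
  hence "of_int k = (of_int (2 * m) :: real)" by simp
  hence "k = 2 * m" by linarith
  thus "even k" by simp
next
  assume "even k"
  then obtain m where "k = 2 * m" by blast
  thus "of_int k / 2 \<in> (\<int> :: real set)" by simp
qed

lemma kel_eq: "kel i j = kel i' j' \<longleftrightarrow> even (i' - i) \<and> even (j' - j)"
proof -
  have "kel i j = kel i' j' \<longleftrightarrow> isZ (kv i' j' - kv i j)"
    unfolding kel_def using star_eq_iff[OF kv_NC[of i j] kv_NC[of i' j']] by simp
  also have "\<dots> \<longleftrightarrow> (of_int (i' - i) / 2 :: real) \<in> \<int> \<and> (of_int (j' - j) / 2 :: real) \<in> \<int>"
    by (simp add: isZ_def diff_divide_distrib)
  also have "\<dots> \<longleftrightarrow> even (i' - i) \<and> even (j' - j)" by (simp only: half_int)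
  finally show ?thesis .
qed

lemma kel_mod: "kel i j = kel (i mod 2) (j mod 2)"
  unfolding kel_eq by (simp add: even_iff_mod_2_eq_zero mod_diff_eq[symmetric])

lemma kel_mult: "kel i j \<otimes>\<^bsub>AffM\<^esub> kel i' j' = kel (i + i') (j + j')"
proof -
  have "kv i j + kv i' j' = kv (i + i') (j + j')"
    by (simp add: vec_eq_iff forall_2 add_divide_distrib)
  thus ?thesis unfolding kel_def using star_mult[OF kv_NC kv_NC] by (simp add: amul_def)
qed

lemma kel_one: "kel 0 0 = \<one>\<^bsub>AffM\<^esub>"
  by (simp add: kel_def star_one kv_def)

lemma kel_carrier: "kel i j \<in> carrier AffM"
  using kv_NC by (simp add: kel_def AffM_simps)

lemma kel_inv: "inv\<^bsub>AffM\<^esub> (kel i j) = kel (- i) (- j)"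
  by (rule group.inv_equality[OF group_AffM]) (simp_all add: kel_mult kel_one kel_carrier)

definition Kset :: "((real^2) set \<Rightarrow> (real^2) set) set" where
  "Kset = {f. \<exists>i j. f = kel i j}"

lemma kel_in_Kset[simp]: "kel i j \<in> Kset" by (auto simp: Kset_def)

lemma Kset_four: "Kset = {kel 0 0, kel 1 0, kel 0 1, kel 1 1}"
proof
  show "Kset \<subseteq> {kel 0 0, kel 1 0, kel 0 1, kel 1 1}"
  proof
    fix f assume "f \<in> Kset"
    then obtain i j where f: "f = kel (i mod 2) (j mod 2)" using kel_mod by (auto simp: Kset_def)
    have "i mod 2 = 0 \<or> i mod 2 = 1" "j mod 2 = 0 \<or> j mod 2 = 1" by auto
    then show "f \<in> {kel 0 0, kel 1 0, kel 0 1, kel 1 1}" using f by auto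
  qed
qed (auto simp: Kset_def)

lemma star_Kset: "isZ (2 *\<^sub>R a) \<Longrightarrow> star (a, mat 1) \<in> Kset"
proof -
  assume "isZ (2 *\<^sub>R a)"
  then obtain i j where ij: "2 * a$1 = of_int i" "2 * a$2 = of_int j"
    by (auto simp: isZ_def elim!: Ints_cases)
  have "a = kv i j" using ij by (simp add: vec_eq_iff forall_2)
  thus ?thesis by (auto simp: Kset_def kel_def)
qed

lemma gens_eq: "{star ((1/2) *\<^sub>R e1, mat 1), star ((1/2) *\<^sub>R e2, mat 1)} = {kel 1 0, kel 0 1}"
  by (simp add: kel_def kv_def)

lemma Kgrp_eq: "Kgrp = Kset"
proof
  show "Kgrp \<subseteq> Kset"
  proof
    fix f assume "f \<in> Kgrp"
    then show "f \<in> Kset" unfolding Kgrp_def gens_eq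
    proof (induction rule: generate.induct)
      case one then show ?case by (auto simp: Kset_def kel_one[symmetric])
    next
      case (incl h) then show ?case by (auto simp: Kset_def)
    next
      case (inv h) then show ?case by (auto simp: kel_inv)
    next
      case (eng h1 h2) then show ?case by (auto simp: Kset_def kel_mult) blast
    qed
  qed
next
  have g: "kel 0 0 \<in> Kgrp" "kel 1 0 \<in> Kgrp" "kel 0 1 \<in> Kgrp"
    unfolding Kgrp_def gens_eq kel_one by (auto intro: generate.one generate.incl)
  have "kel 1 0 \<otimes>\<^bsub>AffM\<^esub> kel 0 1 \<in> Kgrp"
    using g unfolding Kgrp_def gens_eq by (intro generate.eng) auto
  hence "kel 1 1 \<in> Kgrp" by (simp add: kel_mult)
  thus "Kset \<subseteq> Kgrp" using g unfolding Kset_four by auto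
qed

lemma card_K: "card Kgrp = 4"
proof -
  have "kel 0 0 \<noteq> kel 1 0" "kel 0 0 \<noteq> kel 0 1" "kel 0 0 \<noteq> kel 1 1"
    "kel 1 0 \<noteq> kel 0 1" "kel 1 0 \<noteq> kel 1 1" "kel 0 1 \<noteq> kel 1 1"
    by (simp_all add: kel_eq)
  thus ?thesis by (simp add: Kgrp_eq Kset_four)
qed

lemma K_subgroup: "subgroup Kgrp AffM"
  unfolding Kgrp_def gens_eq
  by (rule group.generate_is_subgroup[OF group_AffM]) (simp add: kel_carrier)

lemma K_normal: "Kgrp \<lhd> AffM"
proof -
  have "x \<otimes>\<^bsub>AffM\<^esub> h \<otimes>\<^bsub>AffM\<^esub> inv\<^bsub>AffM\<^esub> x \<in> Kgrp" if x: "x \<in> carrier AffM" and h: "h \<in> Kgrp" for x h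
  proof -
    obtain g where g: "g \<in> NC" "x = star g" using x by (auto simp: AffM_simps)
    obtain a A where gA: "g = (a, A)" by (cases g)
    have a2: "isZ (2 *\<^sub>R a)" and A: "A \<in> carrier GL2Z" using g gA by (auto simp: NC_def)
    have d: "det A = 1 \<or> det A = -1" and iA: "intM A" using A by (auto simp: GLc_iff)
    obtain i j where h': "h = kel i j" using h by (auto simp: Kgrp_eq Kset_def)
    have "x \<otimes>\<^bsub>AffM\<^esub> h \<otimes>\<^bsub>AffM\<^esub> inv\<^bsub>AffM\<^esub> x = star (amul (amul g (kv i j, mat 1)) (ainv g))"
      using g h' kv_NC NC_ainv[OF g(1)] by (simp add: kel_def inv_star star_mult NC_amul)
    also have "amul (amul g (kv i j, mat 1)) (ainv g) = (A *v kv i j, mat 1)"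
      using inv2_right[OF d] by (simp add: gA ainv_def amul_def matrix_vector_mul_assoc mv_neg)
    finally have e: "x \<otimes>\<^bsub>AffM\<^esub> h \<otimes>\<^bsub>AffM\<^esub> inv\<^bsub>AffM\<^esub> x = star (A *v kv i j, mat 1)" .
    have "2 *\<^sub>R (A *v kv i j) = A *v (2 *\<^sub>R kv i j)" by (simp add: matrix_vector_mult_scaleR)
    moreover have "isZ (2 *\<^sub>R kv i j)" by (simp add: isZ_def)
    ultimately have "isZ (2 *\<^sub>R (A *v kv i j))" using iA by auto
    thus ?thesis using e star_Kset Kgrp_eq by simp
  qed
  thus ?thesis using group.normal_inv_iff[OF group_AffM] K_subgroup by blast
qed

definition phiK :: "int \<times> int \<Rightarrow> (real^2) set \<Rightarrow> (real^2) set" where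
  "phiK p = kel (fst p) (snd p)"



lemma Z2_carrier: "carrier (integer_mod_group 2) = {0, 1}"
  by (auto simp: carrier_integer_mod_group)
lemma Z2_mult: "(i, j) \<otimes>\<^bsub>integer_mod_group 2 \<times>\<times> integer_mod_group 2\<^esub> (i', j') = ((i + i') mod 2, (j + j') mod 2)"
  by (simp add: DirProd_def)
lemma upd_mult: "x \<otimes>\<^bsub>AffM\<lparr>carrier := Kgrp\<rparr>\<^esub> y = x \<otimes>\<^bsub>AffM\<^esub> y"
  by simp
lemma upd_carrier: "carrier (AffM\<lparr>carrier := Kgrp\<rparr>) = Kgrp"
  by simp
lemma phiK_mult: "phiK ((i, j) \<otimes>\<^bsub>integer_mod_group 2 \<times>\<times> integer_mod_group 2\<^esub> (i', j')) = phiK (i, j) \<otimes>\<^bsub>AffM\<^esub> phiK (i', j')"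
proof -
  have "phiK ((i, j) \<otimes>\<^bsub>integer_mod_group 2 \<times>\<times> integer_mod_group 2\<^esub> (i', j')) = kel ((i + i') mod 2) ((j + j') mod 2)"
    unfolding Z2_mult phiK_def by simp
  also have "\<dots> = kel (i + i') (j + j')" by (rule kel_mod[symmetric])
  also have "\<dots> = phiK (i, j) \<otimes>\<^bsub>AffM\<^esub> phiK (i', j')" by (simp add: phiK_def kel_mult)
  finally show ?thesis .
qed
lemma phiK_hom: "phiK \<in> hom (integer_mod_group 2 \<times>\<times> integer_mod_group 2) (AffM\<lparr>carrier := Kgrp\<rparr>)"
proof (rule homI)
  fix p show "phiK p \<in> carrier (AffM\<lparr>carrier := Kgrp\<rparr>)"
    unfolding upd_carrier Kgrp_eq phiK_def by simp
next
  fix p q :: "int \<times> int"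
  obtain i j i' j' where pq: "p = (i, j)" "q = (i', j')" by (cases p, cases q)
  show "phiK (p \<otimes>\<^bsub>integer_mod_group 2 \<times>\<times> integer_mod_group 2\<^esub> q) = phiK p \<otimes>\<^bsub>AffM\<lparr>carrier := Kgrp\<rparr>\<^esub> phiK q"
    unfolding upd_mult pq by (rule phiK_mult)
qed

lemma kel01_eq: "i \<in> {0,1} \<Longrightarrow> i' \<in> {0,1} \<Longrightarrow> even (i' - i) \<longleftrightarrow> i' = (i::int)"
  by auto

lemma phiK_bij: "bij_betw phiK (carrier (integer_mod_group 2 \<times>\<times> integer_mod_group 2)) Kgrp"
proof (rule bij_betwI')
  fix p q assume p: "p \<in> carrier (integer_mod_group 2 \<times>\<times> integer_mod_group 2)"
    and q: "q \<in> carrier (integer_mod_group 2 \<times>\<times> integer_mod_group 2)"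
  obtain i j i' j' where pq: "p = (i, j)" "q = (i', j')" by (cases p, cases q)
  have m: "i \<in> {0,1}" "j \<in> {0,1}" "i' \<in> {0,1}" "j' \<in> {0,1}" using p q pq by (auto simp: Z2_carrier)
  have e1: "even (i' - i) \<longleftrightarrow> i' = i" by (rule kel01_eq) (use m in auto)
  have e2: "even (j' - j) \<longleftrightarrow> j' = j" by (rule kel01_eq) (use m in auto)
  show "(phiK p = phiK q) = (p = q)"
    unfolding pq phiK_def fst_conv snd_conv kel_eq e1 e2 by auto
next
  fix p show "phiK p \<in> Kgrp" by (simp add: phiK_def Kgrp_eq)
next
  fix f assume "f \<in> Kgrp"
  then have "f \<in> {kel 0 0, kel 1 0, kel 0 1, kel 1 1}" using Kgrp_eq Kset_four by simp
  then have "f = phiK (0,0) \<or> f = phiK (1,0) \<or> f = phiK (0,1) \<or> f = phiK (1,1)"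
    by (simp add: phiK_def)
  then show "\<exists>p\<in>carrier (integer_mod_group 2 \<times>\<times> integer_mod_group 2). f = phiK p"
    unfolding carrier_DirProd Z2_carrier by blast
qed

lemma K_iso: "AffM\<lparr>carrier := Kgrp\<rparr> \<cong> integer_mod_group 2 \<times>\<times> integer_mod_group 2"
proof -
  have "phiK \<in> iso (integer_mod_group 2 \<times>\<times> integer_mod_group 2) (AffM\<lparr>carrier := Kgrp\<rparr>)"
    unfolding iso_def using phiK_hom phiK_bij upd_carrier by simp
  hence "integer_mod_group 2 \<times>\<times> integer_mod_group 2 \<cong> AffM\<lparr>carrier := Kgrp\<rparr>"
    unfolding is_iso_def by blast
  thus ?thesis
    by (rule group.iso_sym[OF DirProd_group[OF group_integer_mod_group group_integer_mod_group]])
qed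


lemma GL2Z_mult[simp]: "A \<otimes>\<^bsub>GL2Z\<^esub> B = A ** B" by (simp add: GL2Z_def)

lemma pm_eq: "pm A = {A, - A}"
  by (auto simp: pm_def r_coset_def)

lemma pm_eq_iff: "pm A = pm B \<longleftrightarrow> A = B \<or> A = - B"
proof
  assume "pm A = pm B"
  hence "A \<in> pm B" using pm_eq[of A] by auto
  thus "A = B \<or> A = - B" by (simp add: pm_eq)
next
  assume "A = B \<or> A = - B"
  thus "pm A = pm B" by (auto simp: pm_eq)
qed

lemma PGL_carrier: "carrier PGL2Z = pm ` carrier GL2Z"
  by (auto simp: PGL2Z_def FactGroup_def RCOSETS_def pm_def)
lemma PGL_mult: "P \<otimes>\<^bsub>PGL2Z\<^esub> Q = P <#>\<^bsub>GL2Z\<^esub> Q"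
  by (simp add: PGL2Z_def FactGroup_def)
lemma PGL_one: "\<one>\<^bsub>PGL2Z\<^esub> = {mat 1, - mat 1}"
  by (simp add: PGL2Z_def FactGroup_def)

lemma pm_mult: "pm A \<otimes>\<^bsub>PGL2Z\<^esub> pm B = pm (A ** B)"
  unfolding PGL_mult pm_eq set_mult_def by auto

lemma snd_amul: "snd (amul g h) = snd g ** snd h" by (simp add: amul_def)

definition eta :: "((real^2) set \<Rightarrow> (real^2) set) \<Rightarrow> (real^2^2) set" where
  "eta f = pm (snd (SOME g. g \<in> NC \<and> star g = f))"

lemma eta_star: "g \<in> NC \<Longrightarrow> eta (star g) = pm (snd g)"
proof -
  assume gN: "g \<in> NC"
  have "\<exists>g'. g' \<in> NC \<and> star g' = star g" using gN by blast
  hence s: "(SOME g'. g' \<in> NC \<and> star g' = star g) \<in> NC \<and> star (SOME g'. g' \<in> NC \<and> star g' = star g) = star g"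
    by (rule someI_ex)
  obtain b B where bB: "(SOME g'. g' \<in> NC \<and> star g' = star g) = (b, B)" by fastforce
  obtain a A where aA: "g = (a, A)" by fastforce
  have s': "(b, B) \<in> NC" "star (b, B) = star g" using s unfolding bB by auto
  have "(A = B \<and> isZ (a - b)) \<or> (A = - B \<and> isZ (a + b))"
    using star_eq_iff[of b B a A] s' gN aA by simp
  hence "pm B = pm A" by (auto simp: pm_eq_iff)
  thus ?thesis unfolding eta_def bB by (simp add: aA)
qed

definition sigma :: "(real^2^2) set \<Rightarrow> (real^2) set \<Rightarrow> (real^2) set" where
  "sigma P = star (0, SOME A. A \<in> carrier GL2Z \<and> pm A = P)"

lemma NC_0: "A \<in> carrier GL2Z \<Longrightarrow> (0, A) \<in> NC" by (simp add: NC_def)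

lemma star0_eq: "A \<in> carrier GL2Z \<Longrightarrow> B \<in> carrier GL2Z \<Longrightarrow> star (0, A) = star (0, B) \<longleftrightarrow> pm A = pm B"
  using star_eq_iff[OF NC_0 NC_0, of A B] by (auto simp: pm_eq_iff)

lemma sigma_pm: "A \<in> carrier GL2Z \<Longrightarrow> sigma (pm A) = star (0, A)"
proof -
  assume A: "A \<in> carrier GL2Z"
  have "\<exists>A'. A' \<in> carrier GL2Z \<and> pm A' = pm A" using A by blast
  hence s: "(SOME A'. A' \<in> carrier GL2Z \<and> pm A' = pm A) \<in> carrier GL2Z \<and> pm (SOME A'. A' \<in> carrier GL2Z \<and> pm A' = pm A) = pm A"
    by (rule someI_ex)
  thus ?thesis unfolding sigma_def using star0_eq[OF _ A] by blast
qed

lemma eta_hom: "eta \<in> hom AffM PGL2Z"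
proof (rule homI)
  fix x assume "x \<in> carrier AffM"
  then obtain g where g: "g \<in> NC" "x = star g" by (auto simp: AffM_simps)
  then show "eta x \<in> carrier PGL2Z" by (auto simp: eta_star PGL_carrier NC_def)
next
  fix x y assume "x \<in> carrier AffM" "y \<in> carrier AffM"
  then obtain g h where g: "g \<in> NC" "x = star g" and h: "h \<in> NC" "y = star h" by (auto simp: AffM_simps)
  then show "eta (x \<otimes>\<^bsub>AffM\<^esub> y) = eta x \<otimes>\<^bsub>PGL2Z\<^esub> eta y"
    by (simp add: star_mult NC_amul eta_star pm_mult snd_amul)
qed

lemma eta_epi: "eta \<in> epi AffM PGL2Z"
proof -
  have "eta ` carrier AffM = carrier PGL2Z"
  proof
    show "eta ` carrier AffM \<subseteq> carrier PGL2Z" using eta_hom by (rule hom_carrier)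
  next
    show "carrier PGL2Z \<subseteq> eta ` carrier AffM"
    proof
      fix P assume "P \<in> carrier PGL2Z"
      then obtain A where A: "A \<in> carrier GL2Z" "P = pm A" by (auto simp: PGL_carrier)
      hence "P = eta (star (0, A))" by (simp add: eta_star NC_0)
      moreover have "star (0, A) \<in> carrier AffM" using A by (simp add: AffM_simps NC_0)
      ultimately show "P \<in> eta ` carrier AffM" by blast
    qed
  qed
  thus ?thesis using eta_hom by (simp add: epi_def)
qed

lemma eta_kernel: "kernel AffM PGL2Z eta = Kgrp"
proof
  show "kernel AffM PGL2Z eta \<subseteq> Kgrp"
  proof
    fix x assume "x \<in> kernel AffM PGL2Z eta"
    hence x: "x \<in> carrier AffM" "eta x = {mat 1, - mat 1}" by (auto simp: kernel_def PGL_one)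
    then obtain a A where g: "(a, A) \<in> NC" "x = star (a, A)" by (auto simp: AffM_simps)
    have a2: "isZ (2 *\<^sub>R a)" using g by (simp add: NC_def)
    have "pm A = pm (mat 1)" using x g by (simp add: eta_star pm_eq)
    hence "A = mat 1 \<or> A = - mat 1" by (simp add: pm_eq_iff)
    hence "x = star (a, mat 1)"
    proof
      assume "A = mat 1" thus ?thesis using g by simp
    next
      assume A: "A = - mat 1"
      have "(a, mat 1) \<in> NC" using a2 by (simp add: NC_def)
      moreover have "isZ (a + a)" using a2 by (simp add: scaleR_2)
      ultimately show ?thesis using star_eq_iff[of a A a "mat 1"] g A by simp
    qed
    thus "x \<in> Kgrp" using star_Kset[OF a2] Kgrp_eq by simp
  qed
next
  show "Kgrp \<subseteq> kernel AffM PGL2Z eta"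
  proof
    fix x assume "x \<in> Kgrp"
    then obtain i j where x: "x = kel i j" by (auto simp: Kgrp_eq Kset_def)
    have "eta x = {mat 1, - mat 1}" using kv_NC by (simp add: x kel_def eta_star pm_eq)
    thus "x \<in> kernel AffM PGL2Z eta" using kel_carrier x by (simp add: kernel_def PGL_one)
  qed
qed

lemma sigma_hom: "sigma \<in> hom PGL2Z AffM"
proof (rule homI)
  fix P assume "P \<in> carrier PGL2Z"
  then obtain A where A: "A \<in> carrier GL2Z" "P = pm A" by (auto simp: PGL_carrier)
  then show "sigma P \<in> carrier AffM" by (simp add: sigma_pm AffM_simps NC_0)
next
  fix P Q assume "P \<in> carrier PGL2Z" "Q \<in> carrier PGL2Z"
  then obtain A B where A: "A \<in> carrier GL2Z" "P = pm A" and B: "B \<in> carrier GL2Z" "Q = pm B"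
    by (auto simp: PGL_carrier)
  have "sigma (P \<otimes>\<^bsub>PGL2Z\<^esub> Q) = star (0, A ** B)"
    using A B by (simp add: pm_mult sigma_pm GL_mult)
  also have "\<dots> = star (0, A) \<otimes>\<^bsub>AffM\<^esub> star (0, B)"
    using A B by (simp add: star_mult NC_0 amul_def)
  finally show "sigma (P \<otimes>\<^bsub>PGL2Z\<^esub> Q) = sigma P \<otimes>\<^bsub>AffM\<^esub> sigma Q"
    using A B by (simp add: sigma_pm)
qed

lemma sigma_mon: "sigma \<in> mon PGL2Z AffM"
proof -
  have "inj_on sigma (carrier PGL2Z)"
  proof (rule inj_onI)
    fix P Q assume "P \<in> carrier PGL2Z" "Q \<in> carrier PGL2Z" "sigma P = sigma Q"
    then obtain A B where A: "A \<in> carrier GL2Z" "P = pm A" and B: "B \<in> carrier GL2Z" "Q = pm B"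
      and e: "sigma P = sigma Q" by (auto simp: PGL_carrier)
    have "star (0, A) = star (0, B)" using e A B by (simp add: sigma_pm)
    thus "P = Q" using star0_eq[OF A(1) B(1)] A B by simp
  qed
  thus ?thesis using sigma_hom by (simp add: mon_def)
qed

lemma eta_sigma: "x \<in> carrier PGL2Z \<Longrightarrow> eta (sigma x) = x"
proof -
  assume "x \<in> carrier PGL2Z"
  then obtain A where A: "A \<in> carrier GL2Z" "x = pm A" by (auto simp: PGL_carrier)
  thus ?thesis by (simp add: sigma_pm eta_star NC_0)
qed

theorem lemma21:
  shows "group AffM
    \<and> Kgrp \<lhd> AffM
    \<and> card Kgrp = 4
    \<and> AffM\<lparr>carrier := Kgrp\<rparr> \<cong> integer_mod_group 2 \<times>\<times> integer_mod_group 2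
    \<and> (\<exists>\<eta>. (\<forall>g\<in>NM. \<eta> (star g) = pm (snd g))
          \<and> \<eta> \<in> epi AffM PGL2Z
          \<and> kernel AffM PGL2Z \<eta> = Kgrp
          \<and> (\<exists>\<sigma>. (\<forall>A\<in>carrier GL2Z. \<sigma> (pm A) = star (0, A))
                \<and> \<sigma> \<in> mon PGL2Z AffM
                \<and> (\<forall>x\<in>carrier PGL2Z. \<eta> (\<sigma> x) = x)))"
proof -
  have e: "\<forall>g\<in>NM. eta (star g) = pm (snd g)" using eta_star NM_eq by simp
  have s: "\<forall>A\<in>carrier GL2Z. sigma (pm A) = star (0, A)" using sigma_pm by simp
  have es: "\<forall>x\<in>carrier PGL2Z. eta (sigma x) = x" using eta_sigma by simp
  show ?thesis
    using group_AffM K_normal card_K K_iso e eta_epi eta_kernel s sigma_mon es by blast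
qed

end
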